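(* Let $A*_C B$ be a free amalgamated product and $f:\Gamma\to A*_C B$ a surjective group morphism. Then $\Gamma$ is the free amalgamated product $f^{-1}(A)*_{f^{-1}(C)}f^{-1}(B)$. If moreover $\Gamma$ is generated by two subgroups $\Gamma_1,\Gamma_2$ with $f(\Gamma_1)\subseteq A$, $f(\Gamma_2)\subseteq B$, the induced map $\Gamma_1\to A/C$ is injective, and $\Gamma_1(\Gamma_2\cap f^{-1}(C))$ is a subgroup, then $f^{-1}(B)=\Gamma_2$ and $\Gamma\cong(\Gamma_1f^{-1}(C))*_{f^{-1}(C)}\Gamma_2$.
   Context: $A/C$ denotes the set of left cosets of $C$ in $A$. *)

theory Defs
  imports "HOL-Algebra.Algebra"
begin

definition reduced_amalg_word :: "'a set \<Rightarrow> 'a set \<Rightarrow> 'a set \<Rightarrow> 'a list \<Rightarrow> bool" where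
  "reduced_amalg_word A B C ws \<longleftrightarrow>
     ws \<noteq> [] \<and>
     (\<forall>i < length ws. ws ! i \<in> (A - C) \<union> (B - C)) \<and>
     (\<forall>i. Suc i < length ws \<longrightarrow>
        \<not> (ws ! i \<in> A \<and> ws ! Suc i \<in> A) \<and> \<not> (ws ! i \<in> B \<and> ws ! Suc i \<in> B))"

text \<open>G is (internally) the free amalgamated product A *_C B of its subgroups A, B:
  C = A \<inter> B, A \<union> B generates G, and no reduced word has trivial product
  (normal form theorem; equivalently the canonical map from the abstract
  amalgamated product to G is an isomorphism).\<close>
definition amalgamated_product ::
  "('a, 'c) monoid_scheme \<Rightarrow> 'a set \<Rightarrow> 'a set \<Rightarrow> 'a set \<Rightarrow> bool" where
  "amalgamated_product G A B C \<longleftrightarrow>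
     subgroup A G \<and> subgroup B G \<and> C = A \<inter> B \<and>
     generate G (A \<union> B) = carrier G \<and>
     (\<forall>ws. reduced_amalg_word A B C ws \<longrightarrow>
        foldr (\<lambda>x y. x \<otimes>\<^bsub>G\<^esub> y) ws \<one>\<^bsub>G\<^esub> \<noteq> \<one>\<^bsub>G\<^esub>)"

end

theory Submission
  imports Defs
begin

abbreviation wprod :: "('a, 'c) monoid_scheme \<Rightarrow> 'a list \<Rightarrow> 'a" where
  "wprod M ws \<equiv> foldr (\<lambda>x y. x \<otimes>\<^bsub>M\<^esub> y) ws \<one>\<^bsub>M\<^esub>"

lemma red_sym: "reduced_amalg_word A B C ws = reduced_amalg_word B A C ws"
  by (auto simp: reduced_amalg_word_def)

lemma red_Cons:
  "reduced_amalg_word A B C (a # ws) \<longleftrightarrow>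
     a \<in> (A - C) \<union> (B - C) \<and>
     (ws = [] \<or> (reduced_amalg_word A B C ws \<and> \<not> (a \<in> A \<and> hd ws \<in> A) \<and> \<not> (a \<in> B \<and> hd ws \<in> B)))"
proof
  assume r: "reduced_amalg_word A B C (a # ws)"
  then have 1: "\<forall>i < length (a#ws). (a#ws) ! i \<in> (A - C) \<union> (B - C)"
    and 2: "\<forall>i. Suc i < length (a#ws) \<longrightarrow>
        \<not> ((a#ws) ! i \<in> A \<and> (a#ws) ! Suc i \<in> A) \<and> \<not> ((a#ws) ! i \<in> B \<and> (a#ws) ! Suc i \<in> B)"
    by (auto simp: reduced_amalg_word_def)
  have a: "a \<in> (A - C) \<union> (B - C)" using 1[rule_format, of 0] by simp
  show "a \<in> (A - C) \<union> (B - C) \<and>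
     (ws = [] \<or> (reduced_amalg_word A B C ws \<and> \<not> (a \<in> A \<and> hd ws \<in> A) \<and> \<not> (a \<in> B \<and> hd ws \<in> B)))"
  proof (cases ws)
    case Nil then show ?thesis using a by simp
  next
    case (Cons b bs)
    have "reduced_amalg_word A B C ws"
      unfolding reduced_amalg_word_def
    proof (intro conjI allI impI)
      show "ws \<noteq> []" using Cons by simp
      fix i assume "i < length ws" then show "ws ! i \<in> (A - C) \<union> (B - C)"
        using 1[rule_format, of "Suc i"] by simp
    next
      fix i assume "Suc i < length ws"
      then show "\<not> (ws ! i \<in> A \<and> ws ! Suc i \<in> A)" "\<not> (ws ! i \<in> B \<and> ws ! Suc i \<in> B)"
        using 2[rule_format, of "Suc i"] by simp_all
    qed
    moreover have "\<not> (a \<in> A \<and> hd ws \<in> A) \<and> \<not> (a \<in> B \<and> hd ws \<in> B)"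
      using 2[rule_format, of 0] Cons by simp
    ultimately show ?thesis using a by simp
  qed
next
  assume h: "a \<in> (A - C) \<union> (B - C) \<and>
     (ws = [] \<or> (reduced_amalg_word A B C ws \<and> \<not> (a \<in> A \<and> hd ws \<in> A) \<and> \<not> (a \<in> B \<and> hd ws \<in> B)))"
  show "reduced_amalg_word A B C (a # ws)"
  proof (cases ws)
    case Nil then show ?thesis using h by (auto simp: reduced_amalg_word_def)
  next
    case (Cons b bs)
    then have r: "reduced_amalg_word A B C ws" and n1: "\<not> (a \<in> A \<and> b \<in> A)" and n2: "\<not> (a \<in> B \<and> b \<in> B)"
      using h by auto
    from r have 1: "\<forall>i < length ws. ws ! i \<in> (A - C) \<union> (B - C)"
      and 2: "\<forall>i. Suc i < length ws \<longrightarrow>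
        \<not> (ws ! i \<in> A \<and> ws ! Suc i \<in> A) \<and> \<not> (ws ! i \<in> B \<and> ws ! Suc i \<in> B)"
      by (auto simp: reduced_amalg_word_def)
    show ?thesis
      unfolding reduced_amalg_word_def
    proof (intro conjI allI impI)
      show "a # ws \<noteq> []" by simp
      fix i assume "i < length (a # ws)" then show "(a # ws) ! i \<in> (A - C) \<union> (B - C)"
        using 1 h by (cases i) auto
    next
      fix i assume i: "Suc i < length (a # ws)"
      show "\<not> ((a # ws) ! i \<in> A \<and> (a # ws) ! Suc i \<in> A)"
        using i 2 n1 Cons by (cases i) auto
      show "\<not> ((a # ws) ! i \<in> B \<and> (a # ws) ! Suc i \<in> B)"
        using i 2 n2 Cons by (cases i) auto
    qed
  qed
qed

lemma red_set: "reduced_amalg_word A B C ws \<Longrightarrow> set ws \<subseteq> A \<union> B"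
  by (auto simp: reduced_amalg_word_def in_set_conv_nth)

lemma (in group) wprod_carrier: "set ws \<subseteq> carrier G \<Longrightarrow> wprod G ws \<in> carrier G"
  by (induction ws) auto

lemma hom_wprod:
  fixes G :: "('a, 'c) monoid_scheme" and P :: "('b, 'd) monoid_scheme"
  assumes "group G" "group P" "f \<in> hom G P" "set ws \<subseteq> carrier G"
  shows "f (wprod G ws) = wprod P (map f ws)"
  using assms(4)
proof (induction ws)
  case Nil then show ?case using assms by (simp add: hom_one group.is_monoid)
next
  case (Cons a ws)
  then show ?case using assms group.wprod_carrier[OF assms(1)] by (simp add: hom_mult)
qed

lemma red_map:
  assumes "C = A \<inter> B" "K = f -` C \<inter> SS" "XX \<subseteq> SS" "Y \<subseteq> SS" "f ` XX \<subseteq> A" "f ` Y \<subseteq> B"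
    "XX \<inter> Y \<subseteq> K"
  shows "reduced_amalg_word XX Y K ws \<Longrightarrow> reduced_amalg_word A B C (map f ws)"
proof (induction ws)
  case Nil then show ?case by (simp add: reduced_amalg_word_def)
next
  case (Cons a ws)
  from Cons.prems have a: "a \<in> (XX - K) \<union> (Y - K)"
    and r: "ws = [] \<or> (reduced_amalg_word XX Y K ws \<and> \<not> (a \<in> XX \<and> hd ws \<in> XX) \<and> \<not> (a \<in> Y \<and> hd ws \<in> Y))"
    by (simp_all only: red_Cons)
  have fa: "f a \<in> (A - C) \<union> (B - C)" using a assms by auto
  show ?case
  proof (cases ws)
    case Nil then show ?thesis using fa by (simp add: red_Cons)
  next
    case (Cons b bs)
    then have r1: "reduced_amalg_word XX Y K ws" and n1: "\<not> (a \<in> XX \<and> b \<in> XX)" and n2: "\<not> (a \<in> Y \<and> b \<in> Y)"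
      using r by auto
    have b: "b \<in> (XX - K) \<union> (Y - K)" using r1 Cons by (simp add: red_Cons)
    have "\<not> (f a \<in> A \<and> f b \<in> A)" "\<not> (f a \<in> B \<and> f b \<in> B)"
      using a b n1 n2 assms by auto
    then show ?thesis using Cons.IH r1 fa Cons by (simp add: red_Cons)
  qed
qed


lemma (in group) long_word_not_in_A:
  assumes sA: "subgroup A G" and sB: "subgroup B G" and CAB: "C = A \<inter> B"
    and nt: "\<forall>ws. reduced_amalg_word A B C ws \<longrightarrow> wprod G ws \<noteq> \<one>"
    and r: "reduced_amalg_word A B C (v1 # v2 # rest)"
    and x: "wprod G (v1 # v2 # rest) \<in> A"
  shows False
proof -
  have AC: "A \<subseteq> carrier G" "B \<subseteq> carrier G" using sA sB subgroup.subset by auto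
  have setc: "set (v1 # v2 # rest) \<subseteq> carrier G" using red_set[OF r] AC by auto
  have v1: "v1 \<in> (A - C) \<union> (B - C)" and r2: "reduced_amalg_word A B C (v2 # rest)"
    and n1: "\<not> (v1 \<in> A \<and> v2 \<in> A)" and n2: "\<not> (v1 \<in> B \<and> v2 \<in> B)"
    using r unfolding red_Cons[of A B C v1] by auto
  have v2: "v2 \<in> (A - C) \<union> (B - C)"
    and rr: "rest = [] \<or> (reduced_amalg_word A B C rest \<and> \<not> (v2 \<in> A \<and> hd rest \<in> A) \<and> \<not> (v2 \<in> B \<and> hd rest \<in> B))"
    using r2 unfolding red_Cons[of A B C v2] by auto
  define x where "x = wprod G (v1 # v2 # rest)"
  define p where "p = wprod G rest"
  have pc: "p \<in> carrier G" unfolding p_def using setc wprod_carrier by auto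
  have v1c: "v1 \<in> carrier G" and v2c: "v2 \<in> carrier G" using setc by auto
  have xc: "x \<in> carrier G" unfolding x_def using setc wprod_carrier by blast
  have xA: "x \<in> A" using x x_def by simp
  have xe: "x = v1 \<otimes> (v2 \<otimes> p)" unfolding x_def p_def by simp
  define y where "y = inv x"
  have yA: "y \<in> A" unfolding y_def by (rule subgroup.m_inv_closed[OF sA xA])
  have yc: "y \<in> carrier G" using yA AC by auto
  have yx: "y \<otimes> x = \<one>" unfolding y_def using xc by simp
  show False
  proof (cases "v1 \<in> A")
    case True
    then have v1nB: "v1 \<notin> B" using v1 CAB by auto
    have v2B: "v2 \<in> B - C" "v2 \<notin> A" using True n1 v2 by auto
    have yv1A: "y \<otimes> v1 \<in> A" by (rule subgroup.m_closed[OF sA yA True])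
    show False
    proof (cases "y \<otimes> v1 \<in> C")
      case False
      have "reduced_amalg_word A B C ((y \<otimes> v1) # v2 # rest)"
        using r2 yv1A False v2B CAB unfolding red_Cons[of A B C "y \<otimes> v1"] by auto
      moreover have "wprod G ((y \<otimes> v1) # v2 # rest) = \<one>"
        using yx xe yc v1c v2c pc by (simp add: m_assoc p_def)
      ultimately show False using nt by blast
    next
      case cC: True
      define c where "c = y \<otimes> v1"
      have cA: "c \<in> A" "c \<in> B" using cC CAB c_def by auto
      have cc: "c \<in> carrier G" using cA AC by auto
      have v2B': "v2 \<in> B" using v2B by simp
      have cv2B: "c \<otimes> v2 \<in> B" by (rule subgroup.m_closed[OF sB cA(2) v2B'])
      have cv2nA: "c \<otimes> v2 \<notin> A"
      proof
        assume h: "c \<otimes> v2 \<in> A"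
        have "inv c \<otimes> (c \<otimes> v2) \<in> A" by (rule subgroup.m_closed[OF sA subgroup.m_inv_closed[OF sA cA(1)] h])
        then have "v2 \<in> A" using cc v2c by (simp add: m_assoc[symmetric])
        then show False using v2B by simp
      qed
      have "reduced_amalg_word A B C ((c \<otimes> v2) # rest)"
      proof (cases rest)
        case Nil then show ?thesis using cv2B cv2nA CAB unfolding red_Cons[of A B C "c \<otimes> v2"] by auto
      next
        case (Cons u us)
        then have "reduced_amalg_word A B C rest" "hd rest \<notin> B" using rr v2B by auto
        then show ?thesis using cv2B cv2nA CAB Cons unfolding red_Cons[of A B C "c \<otimes> v2"] by auto
      qed
      moreover have "wprod G ((c \<otimes> v2) # rest) = \<one>"
        using yx xe yc v1c v2c pc c_def by (simp add: m_assoc p_def)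
      ultimately show False using nt by blast
    qed
  next
    case False
    then have v1B: "v1 \<in> B - C" using v1 by auto
    show False
    proof (cases "y \<in> C")
      case False
      have "reduced_amalg_word A B C (y # v1 # v2 # rest)"
        using r yA False \<open>v1 \<notin> A\<close> CAB unfolding red_Cons[of A B C y] by auto
      moreover have "wprod G (y # v1 # v2 # rest) = \<one>"
        using yx xe by (simp add: p_def)
      ultimately show False using nt by blast
    next
      case True
      have yB: "y \<in> B" using True CAB by auto
      have v1B': "v1 \<in> B" using v1B by simp
      have yv1B: "y \<otimes> v1 \<in> B" by (rule subgroup.m_closed[OF sB yB v1B'])
      have yv1nA: "y \<otimes> v1 \<notin> A"
      proof
        assume h: "y \<otimes> v1 \<in> A"
        have "inv y \<otimes> (y \<otimes> v1) \<in> A" by (rule subgroup.m_closed[OF sA subgroup.m_inv_closed[OF sA yA] h])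
        then have "v1 \<in> A" using yc v1c by (simp add: m_assoc[symmetric])
        then show False using \<open>v1 \<notin> A\<close> by simp
      qed
      have v2nB: "v2 \<notin> B" using n2 v1B by auto
      have "reduced_amalg_word A B C ((y \<otimes> v1) # v2 # rest)"
        using r2 yv1B yv1nA v2nB CAB unfolding red_Cons[of A B C "y \<otimes> v1"] by auto
      moreover have "wprod G ((y \<otimes> v1) # v2 # rest) = \<one>"
        using yx xe yc v1c v2c pc by (simp add: m_assoc p_def)
      ultimately show False using nt by blast
    qed
  qed
qed

lemma (in group) long_word_not_in_AB:
  assumes "subgroup A G" and "subgroup B G" and "C = A \<inter> B"
    and "\<forall>ws. reduced_amalg_word A B C ws \<longrightarrow> wprod G ws \<noteq> \<one>"
    and "reduced_amalg_word A B C ws" and "2 \<le> length ws"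
  shows "wprod G ws \<notin> A \<union> B"
proof -
  obtain v1 v2 rest where ws: "ws = v1 # v2 # rest" using assms(6)
    by (cases ws; cases "tl ws") auto
  have "wprod G ws \<notin> A"
  proof
    assume "wprod G ws \<in> A"
    then show False using long_word_not_in_A[OF assms(1-4), of v1 v2 rest] assms(5) ws by simp
  qed
  moreover have "wprod G ws \<notin> B"
  proof
    assume a: "wprod G ws \<in> B"
    have c: "C = B \<inter> A" using assms(3) by auto
    have n: "\<forall>ws. reduced_amalg_word B A C ws \<longrightarrow> wprod G ws \<noteq> \<one>"
      using assms(4) by (simp add: red_sym[of B A C])
    have r: "reduced_amalg_word B A C (v1 # v2 # rest)" using assms(5) ws by (simp add: red_sym[of B A C])
    show False using long_word_not_in_A[OF assms(2,1) c n r] a ws by simp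
  qed
  ultimately show ?thesis by blast
qed


lemma (in group_hom) vimage_subgroup:
  assumes "subgroup S H" shows "subgroup (h -` S \<inter> carrier G) G"
proof (rule G.subgroupI)
  show "h -` S \<inter> carrier G \<subseteq> carrier G" by auto
  have "\<one> \<in> h -` S \<inter> carrier G" using subgroup.one_closed[OF assms] by simp
  then show "h -` S \<inter> carrier G \<noteq> {}" by blast
  fix a b assume a: "a \<in> h -` S \<inter> carrier G"
  then show "inv a \<in> h -` S \<inter> carrier G" using subgroup.m_inv_closed[OF assms] by simp
  assume "b \<in> h -` S \<inter> carrier G"
  then show "a \<otimes> b \<in> h -` S \<inter> carrier G" using a subgroup.m_closed[OF assms] by simp
qed

locale Lctx = group_hom G P f for G (structure) and P (structure) and f +
  fixes A B C
  assumes amal: "amalgamated_product P A B C"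
    and surj: "f ` carrier G = carrier P"
begin

lemma sA: "subgroup A P" and sB: "subgroup B P" and CAB: "C = A \<inter> B"
  and genP: "generate P (A \<union> B) = carrier P"
  and ntP: "\<forall>ws. reduced_amalg_word A B C ws \<longrightarrow> wprod P ws \<noteq> \<one>\<^bsub>P\<^esub>"
  using amal unfolding amalgamated_product_def by auto

lemma sC: "subgroup C P" using sA sB CAB subgroup_Int by blast

abbreviation "A' \<equiv> f -` A \<inter> carrier G"
abbreviation "B' \<equiv> f -` B \<inter> carrier G"
abbreviation "K \<equiv> f -` C \<inter> carrier G"

lemma sA': "subgroup A' G" using vimage_subgroup[OF sA] .
lemma sB': "subgroup B' G" using vimage_subgroup[OF sB] .
lemma sK: "subgroup K G" using vimage_subgroup[OF sC] .

lemma gen1: "generate G (A' \<union> B') = carrier G"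
proof
  show "generate G (A' \<union> B') \<subseteq> carrier G" by (rule G.generate_incl) auto
  have "\<forall>x \<in> carrier G. f x = y \<longrightarrow> x \<in> generate G (A' \<union> B')" if "y \<in> generate P (A \<union> B)" for y
    using that
  proof (induction y rule: generate.induct)
    case one
    then show ?case
    proof (intro ballI impI)
      fix x assume "x \<in> carrier G" "f x = \<one>\<^bsub>P\<^esub>"
      then have "x \<in> A'" using subgroup.one_closed[OF sA] by simp
      then show "x \<in> generate G (A' \<union> B')" by (simp add: generate.incl)
    qed
  next
    case (incl h)
    then show ?case by (auto intro: generate.incl)
  next
    case (inv h)
    then have "inv\<^bsub>P\<^esub> h \<in> A \<union> B" using subgroup.m_inv_closed[OF sA] subgroup.m_inv_closed[OF sB] by blast
    then show ?case by (auto intro: generate.incl)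
  next
    case (eng h1 h2)
    show ?case
    proof (intro ballI impI)
      fix x assume x: "x \<in> carrier G" "f x = h1 \<otimes>\<^bsub>P\<^esub> h2"
      have h1c: "h1 \<in> carrier P" "h2 \<in> carrier P"
        using eng.hyps H.generate_in_carrier[of "A \<union> B"] subgroup.subset[OF sA] subgroup.subset[OF sB] by auto
      obtain x1 where x1: "x1 \<in> carrier G" "f x1 = h1" using h1c surj by (metis imageE)
      define x2 where "x2 = inv x1 \<otimes> x"
      have x2c: "x2 \<in> carrier G" using x1 x x2_def by simp
      have "f x2 = inv\<^bsub>P\<^esub> h1 \<otimes>\<^bsub>P\<^esub> (h1 \<otimes>\<^bsub>P\<^esub> h2)" using x1 x x2_def by simp
      also have "\<dots> = h2" using h1c by (simp add: H.m_assoc[symmetric])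
      finally have "f x2 = h2" .
      then have g1: "x1 \<in> generate G (A' \<union> B')" and g2: "x2 \<in> generate G (A' \<union> B')"
        using eng.IH x1 x2c by auto
      have "x = x1 \<otimes> x2" using x1 x x2_def by (simp add: G.m_assoc[symmetric])
      then show "x \<in> generate G (A' \<union> B')" using g1 g2 generate.eng by metis
    qed
  qed
  then show "carrier G \<subseteq> generate G (A' \<union> B')" using genP surj by blast
qed

lemma part1: "amalgamated_product G A' B' K"
  unfolding amalgamated_product_def
proof (intro conjI allI impI)
  show "subgroup A' G" "subgroup B' G" by (rule sA', rule sB')
  show "K = A' \<inter> B'" using CAB by auto
  show "generate G (A' \<union> B') = carrier G" by (rule gen1)
  fix ws assume r: "reduced_amalg_word A' B' K ws"
  have r2: "reduced_amalg_word A B C (map f ws)"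
    by (rule red_map[OF CAB refl _ _ _ _ _ r]) (use CAB in auto)
  have wc: "set ws \<subseteq> carrier G" using red_set[OF r] by auto
  have "f (wprod G ws) = wprod P (map f ws)" using hom_wprod[OF G.is_group H.is_group homh wc] .
  then show "wprod G ws \<noteq> \<one>" using ntP r2 by force
qed

end

lemma my_lcos_self:
  assumes "group P" "subgroup C P" "x \<in> C" shows "x <#\<^bsub>P\<^esub> C = C"
proof -
  interpret Pg: group P by fact
  show ?thesis proof
  show "x <#\<^bsub>P\<^esub> C \<subseteq> C" using subgroup.m_closed[OF assms(2) assms(3)] unfolding l_coset_def by auto
  show "C \<subseteq> x <#\<^bsub>P\<^esub> C"
  proof
    fix c assume c: "c \<in> C"
    have xc: "x \<in> carrier P" "c \<in> carrier P" using assms(3) c subgroup.subset[OF assms(2)] by blast+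
    have "inv\<^bsub>P\<^esub> x \<otimes>\<^bsub>P\<^esub> c \<in> C" by (rule subgroup.m_closed[OF assms(2) subgroup.m_inv_closed[OF assms(2) assms(3)] c])
    moreover have "c = x \<otimes>\<^bsub>P\<^esub> (inv\<^bsub>P\<^esub> x \<otimes>\<^bsub>P\<^esub> c)"
      using xc by (simp add: Pg.m_assoc[symmetric])
    ultimately show "c \<in> x <#\<^bsub>P\<^esub> C" unfolding l_coset_def by blast
  qed
qed
qed

locale L2 = Lctx +
  fixes G1 G2
  assumes sG1: "subgroup G1 G" and sG2: "subgroup G2 G"
    and gen2: "generate G (G1 \<union> G2) = carrier G"
    and fG1: "f ` G1 \<subseteq> A" and fG2: "f ` G2 \<subseteq> B"
    and injC: "inj_on (\<lambda>g. f g <#\<^bsub>P\<^esub> C) G1"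
    and sHH: "subgroup (G1 <#> (G2 \<inter> K)) G"
begin

abbreviation "HH \<equiv> G1 <#> (G2 \<inter> K)"

lemma G1c: "G1 \<subseteq> carrier G" using subgroup.subset[OF sG1] .
lemma G2c: "G2 \<subseteq> carrier G" using subgroup.subset[OF sG2] .
lemma HHc: "HH \<subseteq> carrier G" using subgroup.subset[OF sHH] .

lemma G1K: "g \<in> G1 \<Longrightarrow> g \<in> K \<Longrightarrow> g = \<one>"
proof -
  assume g: "g \<in> G1" "g \<in> K"
  have "f g <#\<^bsub>P\<^esub> C = C" using my_lcos_self[OF H.is_group sC] g by auto
  moreover have "f \<one> <#\<^bsub>P\<^esub> C = C" using my_lcos_self[OF H.is_group sC subgroup.one_closed[OF sC]] by simp
  moreover have "\<one> \<in> G1" using subgroup.one_closed[OF sG1] .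
  ultimately show "g = \<one>" using injC g inj_onD by metis
qed

lemma HH_mem: "x \<in> HH \<longleftrightarrow> (\<exists>g\<in>G1. \<exists>k\<in>G2 \<inter> K. x = g \<otimes> k)"
  unfolding set_mult_def by auto

lemma HH_A': "HH \<subseteq> A'"
proof
  fix x assume "x \<in> HH"
  then obtain g k where gk: "g \<in> G1" "k \<in> G2 \<inter> K" "x = g \<otimes> k" using HH_mem by blast
  have "f x = f g \<otimes>\<^bsub>P\<^esub> f k" using gk G1c by auto
  moreover have "f g \<in> A" "f k \<in> A" using gk fG1 CAB by auto
  ultimately have "f x \<in> A" using subgroup.m_closed[OF sA] by simp
  then show "x \<in> A'" using gk G1c by auto
qed

lemma G1_HH: "G1 \<subseteq> HH"
proof
  fix g assume g: "g \<in> G1"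
  have "\<one> \<in> G2 \<inter> K" using subgroup.one_closed[OF sG2] subgroup.one_closed[OF sK] by blast
  moreover have "g = g \<otimes> \<one>" using g G1c by auto
  ultimately show "g \<in> HH" using g HH_mem by blast
qed

lemma K2_HH: "G2 \<inter> K \<subseteq> HH"
proof
  fix k assume k: "k \<in> G2 \<inter> K"
  have "\<one> \<in> G1" using subgroup.one_closed[OF sG1] .
  moreover have "k = \<one> \<otimes> k" using k by auto
  ultimately show "k \<in> HH" using k HH_mem by blast
qed

lemma HH_K: "x \<in> HH \<Longrightarrow> x \<in> K \<Longrightarrow> x \<in> G2 \<inter> K"
proof -
  assume x: "x \<in> HH" "x \<in> K"
  then obtain g k where gk: "g \<in> G1" "k \<in> G2 \<inter> K" "x = g \<otimes> k" using HH_mem by blast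
  have gc: "g \<in> carrier G" "k \<in> carrier G" using gk G1c by auto
  have "g = x \<otimes> inv k" using gk gc by (simp add: G.m_assoc)
  moreover have "inv k \<in> K" using gk subgroup.m_inv_closed[OF sK] by blast
  ultimately have "g \<in> K" using x subgroup.m_closed[OF sK] by simp
  then have "g = \<one>" using G1K gk by blast
  then show ?thesis using gk gc by simp
qed

lemma HH_G2: "HH \<inter> G2 \<subseteq> K" using HH_A' fG2 CAB G2c by auto

definition rep where
  "rep x \<longleftrightarrow> (\<exists>k ws. k \<in> G2 \<inter> K \<and> (ws = [] \<or> reduced_amalg_word HH G2 K ws) \<and> x = k \<otimes> wprod G ws)"

lemma ws_carrier: "ws = [] \<or> reduced_amalg_word HH G2 K ws \<Longrightarrow> set ws \<subseteq> carrier G"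
  using red_set[of HH G2 K ws] HHc G2c by auto

lemma LG2:
  assumes h: "h \<in> G2" and ws: "ws = [] \<or> reduced_amalg_word HH G2 K ws"
  shows "rep (h \<otimes> wprod G ws)"
proof (cases ws)
  case Nil
  show ?thesis
  proof (cases "h \<in> K")
    case True then show ?thesis unfolding rep_def using h Nil by blast
  next
    case False
    have "reduced_amalg_word HH G2 K [h]" using h False by (simp add: red_Cons)
    moreover have "h \<otimes> wprod G ws = \<one> \<otimes> wprod G [h]" using h G2c Nil by auto
    moreover have "\<one> \<in> G2 \<inter> K" using subgroup.one_closed[OF sG2] subgroup.one_closed[OF sK] by blast
    ultimately show ?thesis unfolding rep_def by blast
  qed
next
  case (Cons w rest)
  then have r: "reduced_amalg_word HH G2 K (w # rest)" using ws by simp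
  then have w: "w \<in> (HH - K) \<union> (G2 - K)"
    and rr: "rest = [] \<or> (reduced_amalg_word HH G2 K rest \<and> \<not> (w \<in> HH \<and> hd rest \<in> HH) \<and> \<not> (w \<in> G2 \<and> hd rest \<in> G2))"
    unfolding red_Cons[of HH G2 K w rest] by auto
  have one: "\<one> \<in> G2 \<inter> K" using subgroup.one_closed[OF sG2] subgroup.one_closed[OF sK] by blast
  have wc: "w \<in> carrier G" using w HHc G2c by auto
  have hc: "h \<in> carrier G" using h G2c by auto
  have pc: "wprod G rest \<in> carrier G" using ws_carrier[of rest] rr G.wprod_carrier by blast
  show ?thesis
  proof (cases "w \<in> G2")
    case True
    have hw: "h \<otimes> w \<in> G2" using subgroup.m_closed[OF sG2 h True] .
    have eq: "h \<otimes> wprod G ws = (h \<otimes> w) \<otimes> wprod G rest" using Cons wc hc pc by (simp add: G.m_assoc)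
    show ?thesis
    proof (cases "h \<otimes> w \<in> K")
      case True
      then show ?thesis unfolding rep_def using eq hw rr by blast
    next
      case False
      have nHH: "h \<otimes> w \<notin> HH" using False hw HH_G2 by blast
      have "reduced_amalg_word HH G2 K ((h \<otimes> w) # rest)"
        using rr hw False nHH \<open>w \<in> G2\<close> unfolding red_Cons[of HH G2 K "h \<otimes> w" rest] by auto
      moreover have "h \<otimes> wprod G ws = \<one> \<otimes> wprod G ((h \<otimes> w) # rest)" using eq hc wc pc by simp
      ultimately show ?thesis unfolding rep_def using one by blast
    qed
  next
    case False
    have wHH: "w \<in> HH" using w False by auto
    show ?thesis
    proof (cases "h \<in> K")
      case True
      then show ?thesis unfolding rep_def using h ws by blast
    next
      case hK: False
      have nHH: "h \<notin> HH" using hK h HH_G2 by blast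
      have "reduced_amalg_word HH G2 K (h # ws)"
        using r h hK nHH False Cons unfolding red_Cons[of HH G2 K h ws] by auto
      moreover have "h \<otimes> wprod G ws = \<one> \<otimes> wprod G (h # ws)"
        using hc G.wprod_carrier ws_carrier[OF ws] by simp
      ultimately show ?thesis unfolding rep_def using one by blast
    qed
  qed
qed

lemma LH:
  assumes a: "a \<in> HH" and ws: "ws = [] \<or> reduced_amalg_word HH G2 K ws"
  shows "rep (a \<otimes> wprod G ws)"
proof (cases "a \<in> K")
  case True
  then show ?thesis unfolding rep_def using HH_K a ws by blast
next
  case aK: False
  have one: "\<one> \<in> G2 \<inter> K" using subgroup.one_closed[OF sG2] subgroup.one_closed[OF sK] by blast
  have nG2: "a \<notin> G2" using aK a HH_G2 by blast
  have ac: "a \<in> carrier G" using a HHc by auto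
  show ?thesis
  proof (cases ws)
    case Nil
    have "reduced_amalg_word HH G2 K [a]" using a aK by (simp add: red_Cons)
    moreover have "a \<otimes> wprod G ws = \<one> \<otimes> wprod G [a]" using ac Nil by auto
    ultimately show ?thesis unfolding rep_def using one by blast
  next
    case (Cons w rest)
    then have r: "reduced_amalg_word HH G2 K (w # rest)" using ws by simp
    then have w: "w \<in> (HH - K) \<union> (G2 - K)"
      and rr: "rest = [] \<or> (reduced_amalg_word HH G2 K rest \<and> \<not> (w \<in> HH \<and> hd rest \<in> HH) \<and> \<not> (w \<in> G2 \<and> hd rest \<in> G2))"
      unfolding red_Cons[of HH G2 K w rest] by auto
    have wc: "w \<in> carrier G" using w HHc G2c by auto
    have pc: "wprod G rest \<in> carrier G" using ws_carrier[of rest] rr G.wprod_carrier by blast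
    show ?thesis
    proof (cases "w \<in> G2")
      case True
      have "w \<notin> HH" using True w HH_G2 by blast
      then have "reduced_amalg_word HH G2 K (a # ws)"
        using r a aK nG2 Cons unfolding red_Cons[of HH G2 K a ws] by auto
      moreover have "a \<otimes> wprod G ws = \<one> \<otimes> wprod G (a # ws)"
        using ac G.wprod_carrier ws_carrier[OF ws] by simp
      ultimately show ?thesis unfolding rep_def using one by blast
    next
      case False
      have wHH: "w \<in> HH" using w False by auto
      have aw: "a \<otimes> w \<in> HH" using subgroup.m_closed[OF sHH a wHH] .
      have eq: "a \<otimes> wprod G ws = (a \<otimes> w) \<otimes> wprod G rest" using Cons wc ac pc by (simp add: G.m_assoc)
      show ?thesis
      proof (cases "a \<otimes> w \<in> K")
        case True
        then have "a \<otimes> w \<in> G2" using HH_K aw by blast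
        then show ?thesis using LG2 eq rr by metis
      next
        case awK: False
        have "a \<otimes> w \<notin> G2" using awK aw HH_G2 by blast
        then have "reduced_amalg_word HH G2 K ((a \<otimes> w) # rest)"
          using rr aw awK wHH unfolding red_Cons[of HH G2 K "a \<otimes> w" rest] by auto
        moreover have "a \<otimes> wprod G ws = \<one> \<otimes> wprod G ((a \<otimes> w) # rest)" using eq ac wc pc by simp
        ultimately show ?thesis unfolding rep_def using one by blast
      qed
    qed
  qed
qed

lemma rep_gen:
  assumes x: "x \<in> G1 \<union> G2" and y: "rep y" shows "rep (x \<otimes> y)"
proof -
  obtain k ws where k: "k \<in> G2 \<inter> K" and ws: "ws = [] \<or> reduced_amalg_word HH G2 K ws"
    and yk: "y = k \<otimes> wprod G ws" using y unfolding rep_def by blast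
  have kc: "k \<in> carrier G" "x \<in> carrier G" using k x G1c G2c by auto
  have pc: "wprod G ws \<in> carrier G" using ws_carrier[OF ws] G.wprod_carrier by blast
  have eq: "x \<otimes> y = (x \<otimes> k) \<otimes> wprod G ws" using yk kc pc by (simp add: G.m_assoc)
  show ?thesis
  proof (cases "x \<in> G1")
    case True
    then have "x \<otimes> k \<in> HH" using k HH_mem by blast
    then show ?thesis using LH ws eq by metis
  next
    case False
    then have "x \<otimes> k \<in> G2" using x k subgroup.m_closed[OF sG2] by blast
    then show ?thesis using LG2 ws eq by metis
  qed
qed

lemma rep_carrier: "rep y \<Longrightarrow> y \<in> carrier G"
proof -
  assume "rep y"
  then obtain k ws where k: "k \<in> G2 \<inter> K" and ws: "ws = [] \<or> reduced_amalg_word HH G2 K ws"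
    and yk: "y = k \<otimes> wprod G ws" unfolding rep_def by blast
  have "k \<in> carrier G" using k G2c by auto
  moreover have "wprod G ws \<in> carrier G" using ws_carrier[OF ws] G.wprod_carrier by blast
  ultimately show ?thesis using yk by simp
qed

lemma rep_all: "x \<in> carrier G \<Longrightarrow> rep x"
proof -
  assume "x \<in> carrier G"
  then have xg: "x \<in> generate G (G1 \<union> G2)" using gen2 by simp
  have "\<forall>y. rep y \<longrightarrow> rep (x \<otimes> y)" using xg
  proof (induction x rule: generate.induct)
    case one
    then show ?case using rep_carrier by simp
  next
    case (incl h) then show ?case using rep_gen by blast
  next
    case (inv h)
    then have "inv h \<in> G1 \<union> G2" using subgroup.m_inv_closed[OF sG1] subgroup.m_inv_closed[OF sG2] by blast
    then show ?case using rep_gen by blast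
  next
    case (eng h1 h2)
    have c: "h1 \<in> carrier G" "h2 \<in> carrier G"
      using eng.hyps G.generate_in_carrier[of "G1 \<union> G2"] G1c G2c by auto
    show ?case
    proof (intro allI impI)
      fix y assume y: "rep y"
      have yc: "y \<in> carrier G" using y rep_carrier by blast
      have "rep (h1 \<otimes> (h2 \<otimes> y))" using eng.IH y by blast
      then show "rep (h1 \<otimes> h2 \<otimes> y)" using c yc by (simp add: G.m_assoc)
    qed
  qed
  moreover have "rep \<one>"
  proof -
    have "\<one> \<in> G2 \<inter> K" using subgroup.one_closed[OF sG2] subgroup.one_closed[OF sK] by blast
    then show ?thesis unfolding rep_def by force
  qed
  ultimately have "rep (x \<otimes> \<one>)" by blast
  then show "rep x" using \<open>x \<in> carrier G\<close> by simp
qed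



lemma rep_short:
  assumes x: "x \<in> carrier G" and fx: "f x \<in> A \<union> B"
  shows "x \<in> G2 \<inter> K \<or> (\<exists>k w. k \<in> G2 \<inter> K \<and> w \<in> (HH - K) \<union> (G2 - K) \<and> x = k \<otimes> w)"
proof -
  obtain k ws where k: "k \<in> G2 \<inter> K" and ws: "ws = [] \<or> reduced_amalg_word HH G2 K ws"
    and xk: "x = k \<otimes> wprod G ws" using rep_all[OF x] unfolding rep_def by blast
  have kc: "k \<in> carrier G" using k G2c by auto
  have wsc: "set ws \<subseteq> carrier G" using ws_carrier[OF ws] .
  have qc: "wprod G ws \<in> carrier G" using G.wprod_carrier[OF wsc] .
  have fkC: "f k \<in> C" using k by auto
  have fkc: "f k \<in> carrier P" using kc by simp
  have "wprod G ws = inv k \<otimes> x" using xk kc qc by (simp add: G.m_assoc[symmetric])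
  then have "f (wprod G ws) = inv\<^bsub>P\<^esub> (f k) \<otimes>\<^bsub>P\<^esub> f x" using kc x by simp
  moreover have "inv\<^bsub>P\<^esub> (f k) \<in> A" "inv\<^bsub>P\<^esub> (f k) \<in> B"
    using subgroup.m_inv_closed[OF sA] subgroup.m_inv_closed[OF sB] fkC CAB by auto
  ultimately have fq: "f (wprod G ws) \<in> A \<union> B"
    using fx subgroup.m_closed[OF sA] subgroup.m_closed[OF sB] by auto
  show ?thesis
  proof (cases ws)
    case Nil
    then show ?thesis using xk kc k by simp
  next
    case (Cons w rest)
    show ?thesis
    proof (cases rest)
      case Nil
      have "w \<in> (HH - K) \<union> (G2 - K)" using ws \<open>ws = w # rest\<close> Nil by (simp add: red_Cons)
      moreover have "x = k \<otimes> w" using xk \<open>ws = w # rest\<close> Nil wsc by simp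
      ultimately show ?thesis using k by blast
    next
      case (Cons u us)
      have r: "reduced_amalg_word HH G2 K ws" using ws \<open>ws = w # rest\<close> by simp
      have fHH: "f ` HH \<subseteq> A" using HH_A' by auto
      have "reduced_amalg_word A B C (map f ws)"
        by (rule red_map[OF CAB refl HHc G2c fHH fG2 HH_G2 r])
      moreover have "2 \<le> length (map f ws)" using \<open>ws = w # rest\<close> Cons by simp
      ultimately have "wprod P (map f ws) \<notin> A \<union> B"
        using H.long_word_not_in_AB[OF sA sB CAB ntP] by blast
      moreover have "f (wprod G ws) = wprod P (map f ws)"
        using hom_wprod[OF G.is_group H.is_group homh wsc] .
      ultimately show ?thesis using fq by simp
    qed
  qed
qed

lemma B'_G2: "B' = G2"
proof
  show "G2 \<subseteq> B'" using fG2 G2c by auto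
  show "B' \<subseteq> G2"
  proof
    fix x assume x: "x \<in> B'"
    then have xc: "x \<in> carrier G" and fx: "f x \<in> A \<union> B" by auto
    from rep_short[OF xc fx] show "x \<in> G2"
    proof
      assume "x \<in> G2 \<inter> K" then show ?thesis by simp
    next
      assume "\<exists>k w. k \<in> G2 \<inter> K \<and> w \<in> (HH - K) \<union> (G2 - K) \<and> x = k \<otimes> w"
      then obtain k w where k: "k \<in> G2 \<inter> K" and w: "w \<in> (HH - K) \<union> (G2 - K)" and xk: "x = k \<otimes> w"
        by blast
      have kc: "k \<in> carrier G" "w \<in> carrier G" using k w G2c HHc by auto
      show "x \<in> G2"
      proof (cases "w \<in> G2")
        case True then show ?thesis using xk subgroup.m_closed[OF sG2] k by blast
      next
        case False
        then have wH: "w \<in> HH" "w \<notin> K" using w by auto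
        have "w = inv k \<otimes> x" using xk kc by (simp add: G.m_assoc[symmetric])
        then have "f w = inv\<^bsub>P\<^esub> (f k) \<otimes>\<^bsub>P\<^esub> f x" using kc xc by simp
        moreover have "inv\<^bsub>P\<^esub> (f k) \<in> B" using subgroup.m_inv_closed[OF sB] k CAB by auto
        moreover have "f x \<in> B" using x by simp
        ultimately have "f w \<in> B" using subgroup.m_closed[OF sB] by simp
        moreover have "f w \<in> A" using wH HH_A' by auto
        ultimately have "w \<in> K" using CAB kc by auto
        then show ?thesis using wH by simp
      qed
    qed
  qed
qed

lemma A'_HH: "A' = HH"
proof
  show "HH \<subseteq> A'" by (rule HH_A')
  show "A' \<subseteq> HH"
  proof
    fix x assume x: "x \<in> A'"
    then have xc: "x \<in> carrier G" and fx: "f x \<in> A \<union> B" by auto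
    from rep_short[OF xc fx] show "x \<in> HH"
    proof
      assume "x \<in> G2 \<inter> K" then show ?thesis using K2_HH by blast
    next
      assume "\<exists>k w. k \<in> G2 \<inter> K \<and> w \<in> (HH - K) \<union> (G2 - K) \<and> x = k \<otimes> w"
      then obtain k w where k: "k \<in> G2 \<inter> K" and w: "w \<in> (HH - K) \<union> (G2 - K)" and xk: "x = k \<otimes> w"
        by blast
      have kc: "k \<in> carrier G" "w \<in> carrier G" using k w G2c HHc by auto
      have kH: "k \<in> HH" using k K2_HH by blast
      show "x \<in> HH"
      proof (cases "w \<in> HH")
        case True then show ?thesis using xk subgroup.m_closed[OF sHH kH] by blast
      next
        case False
        then have wG: "w \<in> G2" "w \<notin> K" using w by auto
        have "w = inv k \<otimes> x" using xk kc by (simp add: G.m_assoc[symmetric])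
        then have "f w = inv\<^bsub>P\<^esub> (f k) \<otimes>\<^bsub>P\<^esub> f x" using kc xc by simp
        moreover have "inv\<^bsub>P\<^esub> (f k) \<in> A" using subgroup.m_inv_closed[OF sA] k CAB by auto
        moreover have "f x \<in> A" using x by simp
        ultimately have "f w \<in> A" using subgroup.m_closed[OF sA] by simp
        moreover have "f w \<in> B" using wG fG2 by auto
        ultimately have "w \<in> K" using CAB kc by auto
        then show ?thesis using wG by simp
      qed
    qed
  qed
qed

lemma main2: "B' = G2 \<and> amalgamated_product G (G1 <#> K) G2 K"
proof -
  have "K \<subseteq> G2" using B'_G2 CAB by auto
  then have "G2 \<inter> K = K" by auto
  then have "G1 <#> K = A'" using A'_HH by simp
  then show ?thesis using part1 B'_G2 by simp
qed

end

theorem lemma2p3: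
  fixes G :: "('a, 'c) monoid_scheme" and P :: "('b, 'd) monoid_scheme"
    and f :: "'a \<Rightarrow> 'b"
  assumes "group G" and "group P"
    and "amalgamated_product P A B C"
    and "f \<in> hom G P" and "f ` carrier G = carrier P"
  shows "amalgamated_product G (f -` A \<inter> carrier G) (f -` B \<inter> carrier G)
           (f -` C \<inter> carrier G) \<and>
         (\<forall>G1 G2. subgroup G1 G \<and> subgroup G2 G \<and> generate G (G1 \<union> G2) = carrier G \<and>
           f ` G1 \<subseteq> A \<and> f ` G2 \<subseteq> B \<and>
           inj_on (\<lambda>g. f g <#\<^bsub>P\<^esub> C) G1 \<and>
           subgroup (G1 <#>\<^bsub>G\<^esub> (G2 \<inter> (f -` C \<inter> carrier G))) G
         \<longrightarrow> f -` B \<inter> carrier G = G2 \<and>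
             amalgamated_product G (G1 <#>\<^bsub>G\<^esub> (f -` C \<inter> carrier G)) G2
               (f -` C \<inter> carrier G))"
proof -
  have gh: "group_hom G P f" using assms unfolding group_hom_def group_hom_axioms_def by simp
  have lc: "Lctx G P f A B C"
    by (rule Lctx.intro[OF gh]) (unfold_locales, use assms in auto)
  interpret Lctx G P f A B C by (rule lc)
  show ?thesis
  proof (intro conjI allI impI)
    show "amalgamated_product G (f -` A \<inter> carrier G) (f -` B \<inter> carrier G) (f -` C \<inter> carrier G)"
      by (rule part1)
  next
    fix G1 G2
    assume h: "subgroup G1 G \<and> subgroup G2 G \<and> generate G (G1 \<union> G2) = carrier G \<and>
           f ` G1 \<subseteq> A \<and> f ` G2 \<subseteq> B \<and>
           inj_on (\<lambda>g. f g <#\<^bsub>P\<^esub> C) G1 \<and>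
           subgroup (G1 <#>\<^bsub>G\<^esub> (G2 \<inter> (f -` C \<inter> carrier G))) G"
    have l2: "L2 G P f A B C G1 G2"
      by (rule L2.intro[OF lc], rule L2_axioms.intro) (use h in blast)+
    interpret L2 G P f A B C G1 G2 by (rule l2)
    show "f -` B \<inter> carrier G = G2" using main2 by simp
    show "amalgamated_product G (G1 <#>\<^bsub>G\<^esub> (f -` C \<inter> carrier G)) G2 (f -` C \<inter> carrier G)"
      using main2 by simp
  qed
qed

end
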